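(* Let $f\in\{0,1\}^n$ be tilde-non-isometric. Then either $f$ has a $1$-tilde-error overlap of type S, or $f$ has a $2$-tilde-error overlap.
   Context: Words are over $\{0,1\}$. For $w$ of length $n$: $w[i]$ is its $i$-th symbol, $\mathrm{pre}_l(w)=w[1..l]$ and $\mathrm{suf}_l(w)=w[n-l+1..n]$. A word is $f$-free if it does not contain $f$ as a factor. Operations: the replacement $R_i$ flips the symbol at position $i$. The swap $S_i$ is defined when $w[i]\ne w[i+1]$ and exchanges these two symbols. $\mathrm{dist}_\sim(u,v)$ is the minimum number of replacements and swaps transforming $u$ into the equal-length word $v$. A tilde-transformation from $u$ to $v$ is a sequence of words from $u$ to $v$, each obtained from the previous by one replacement or swap. It is minimal if it uses exactly $\mathrm{dist}_\sim(u,v)$ operations and each position is modified by at most one operation (a swap $S_i$ modifies positions $i,i+1$). A word $f$ of length $n$ is tilde-isometric if, for every $m>n$ and all $f$-free $u,v\in\{0,1\}^m$, there exists a minimal tilde-transformation from $u$ to $v$ all of whose words are $f$-free. Otherwise it is tilde-non-isometric. $f$ has a $q$-tilde-error overlap of length $l$, where $1\le l\le n-1$, if $\mathrm{dist}_\sim(\mathrm{pre}_l(f),\mathrm{suf}_l(f))=q$. A $1$-tilde-error overlap of length $l$ is of type S if $\mathrm{suf}_l(f)=S_i(\mathrm{pre}_l(f))$ for some $i$. *)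

theory Defs
  imports Main "HOL-Library.Sublist"
begin

text \<open>Binary words are lists of booleans (False = 0, True = 1).
  Positions are 0-based here (position i in the paper is index i-1).\<close>

type_synonym word = "bool list"

definition pre :: "nat \<Rightarrow> word \<Rightarrow> word" where
  "pre l w = take l w"

definition suf :: "nat \<Rightarrow> word \<Rightarrow> word" where
  "suf l w = drop (length w - l) w"

definition free :: "word \<Rightarrow> word \<Rightarrow> bool" where
  "free f w \<longleftrightarrow> \<not> sublist f w"

definition repl :: "nat \<Rightarrow> word \<Rightarrow> word" where
  "repl i w = w[i := \<not> w ! i]"

definition swp :: "nat \<Rightarrow> word \<Rightarrow> word" where
  "swp i w = w[i := w ! Suc i, Suc i := w ! i]"

datatype op = R nat | S nat

fun applicable :: "op \<Rightarrow> word \<Rightarrow> bool" where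
  "applicable (R i) w \<longleftrightarrow> i < length w"
| "applicable (S i) w \<longleftrightarrow> Suc i < length w \<and> w ! i \<noteq> w ! Suc i"

fun apply_op :: "op \<Rightarrow> word \<Rightarrow> word" where
  "apply_op (R i) w = repl i w"
| "apply_op (S i) w = swp i w"

fun modified :: "op \<Rightarrow> nat set" where
  "modified (R i) = {i}"
| "modified (S i) = {i, Suc i}"

fun valid_ops :: "op list \<Rightarrow> word \<Rightarrow> bool" where
  "valid_ops [] u = True"
| "valid_ops (p # ps) u \<longleftrightarrow> applicable p u \<and> valid_ops ps (apply_op p u)"

fun result :: "op list \<Rightarrow> word \<Rightarrow> word" where
  "result [] u = u"
| "result (p # ps) u = result ps (apply_op p u)"

fun trace :: "op list \<Rightarrow> word \<Rightarrow> word list" where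
  "trace [] u = [u]"
| "trace (p # ps) u = u # trace ps (apply_op p u)"

definition transforms :: "op list \<Rightarrow> word \<Rightarrow> word \<Rightarrow> bool" where
  "transforms ps u v \<longleftrightarrow> valid_ops ps u \<and> result ps u = v"

definition dist_tilde :: "word \<Rightarrow> word \<Rightarrow> nat" where
  "dist_tilde u v = (LEAST n. \<exists>ps. transforms ps u v \<and> length ps = n)"

definition minimal_transf :: "op list \<Rightarrow> word \<Rightarrow> word \<Rightarrow> bool" where
  "minimal_transf ps u v \<longleftrightarrow> transforms ps u v \<and> length ps = dist_tilde u v \<and>
     (\<forall>j k. j < length ps \<longrightarrow> k < length ps \<longrightarrow> j \<noteq> k \<longrightarrow>
        modified (ps ! j) \<inter> modified (ps ! k) = {})"

definition tilde_isometric :: "word \<Rightarrow> bool" where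
  "tilde_isometric f \<longleftrightarrow>
     (\<forall>m > length f. \<forall>u v. length u = m \<longrightarrow> length v = m \<longrightarrow> free f u \<longrightarrow> free f v \<longrightarrow>
        (\<exists>ps. minimal_transf ps u v \<and> (\<forall>w \<in> set (trace ps u). free f w)))"

definition tilde_error_overlap :: "nat \<Rightarrow> word \<Rightarrow> nat \<Rightarrow> bool" where
  "tilde_error_overlap q f l \<longleftrightarrow>
     1 \<le> l \<and> l \<le> length f - 1 \<and> dist_tilde (pre l f) (suf l f) = q"

definition overlap_type_S :: "word \<Rightarrow> nat \<Rightarrow> bool" where
  "overlap_type_S f l \<longleftrightarrow> tilde_error_overlap 1 f l \<and>
     (\<exists>i. applicable (S i) (pre l f) \<and> suf l f = swp i (pre l f))"

end

theory Submission
  imports Defs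
begin


definition flip :: "nat set \<Rightarrow> word \<Rightarrow> word" where
  "flip A u = map (\<lambda>k. if k \<in> A then \<not> u!k else u!k) [0..<length u]"

lemma length_flip[simp]: "length (flip A u) = length u"
  by (simp add: flip_def)

lemma nth_flip[simp]: "k < length u \<Longrightarrow> flip A u ! k = (if k \<in> A then \<not> u!k else u!k)"
  by (simp add: flip_def)

lemma flip_empty[simp]: "flip {} u = u"
  by (rule nth_equalityI) auto

lemma flip_flip: "A \<inter> B = {} \<Longrightarrow> flip A (flip B u) = flip (A \<union> B) u"
  by (rule nth_equalityI) auto

lemma flip_flip_same: "flip A (flip A u) = u"
  by (rule nth_equalityI) auto

definition mis :: "word \<Rightarrow> word \<Rightarrow> nat set" where
  "mis u v = {k. k < length u \<and> u!k \<noteq> v!k}"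

lemma flip_mis: "length v = length u \<Longrightarrow> flip (mis u v) u = v"
  by (rule nth_equalityI) (auto simp: mis_def)

lemma mis_flip: "mis u (flip A u) = A \<inter> {..<length u}"
  by (auto simp: mis_def split: if_splits)

fun lo :: "op \<Rightarrow> nat" where "lo (R i) = i" | "lo (S i) = i"
fun hi :: "op \<Rightarrow> nat" where "hi (R i) = i" | "hi (S i) = Suc i"

lemma mod_bounds: "k \<in> modified p \<Longrightarrow> lo p \<le> k \<and> k \<le> hi p"
  by (cases p) auto
lemma lo_mod: "lo p \<in> modified p" by (cases p) auto
lemma hi_mod: "hi p \<in> modified p" by (cases p) auto
lemma finite_mod[simp]: "finite (modified p)" by (cases p) auto
lemma card_mod: "card (modified p) \<le> 2" by (cases p) (auto simp: card_insert_if)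

lemma applicable_range: "applicable p u \<Longrightarrow> modified p \<subseteq> {..<length u}"
  by (cases p) auto

lemma length_apply_op[simp]: "length (apply_op p u) = length u"
  by (cases p) (auto simp: repl_def swp_def)

lemma apply_flip: "applicable p u \<Longrightarrow> apply_op p u = flip (modified p) u"
  by (cases p) (auto simp: repl_def swp_def nth_list_update intro!: nth_equalityI)

lemma applicable_flip: "applicable q u \<Longrightarrow> modified q \<inter> A = {} \<or> modified q \<subseteq> A \<Longrightarrow> applicable q (flip A u)"
  by (cases q) auto

definition cov :: "op set \<Rightarrow> word \<Rightarrow> nat set \<Rightarrow> bool" where
 "cov Q u M \<longleftrightarrow> finite Q \<and> (\<forall>q\<in>Q. applicable q u) \<and>
    (\<forall>p\<in>Q. \<forall>q\<in>Q. p \<noteq> q \<longrightarrow> modified p \<inter> modified q = {}) \<and> \<Union>(modified ` Q) = M"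

definition disj_list :: "op list \<Rightarrow> bool" where
 "disj_list ps \<longleftrightarrow> (\<forall>j k. j < length ps \<longrightarrow> k < length ps \<longrightarrow> j \<noteq> k \<longrightarrow> modified (ps!j) \<inter> modified (ps!k) = {})"

lemma disj_list_Cons: "disj_list (p#ps) \<longleftrightarrow> disj_list ps \<and> (\<forall>q\<in>set ps. modified p \<inter> modified q = {})"
proof
  assume H: "disj_list (p#ps)"
  show "disj_list ps \<and> (\<forall>q\<in>set ps. modified p \<inter> modified q = {})"
  proof (intro conjI ballI)
    show "disj_list ps" unfolding disj_list_def
    proof (intro allI impI)
      fix j k assume "j < length ps" "k < length ps" "j \<noteq> k"
      then show "modified (ps!j) \<inter> modified (ps!k) = {}"
        using H unfolding disj_list_def by (metis Suc_inject length_Cons not_less_eq nth_Cons_Suc)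
    qed
  next
    fix q assume "q \<in> set ps"
    then obtain k where "k < length ps" "ps!k = q" by (auto simp: in_set_conv_nth)
    then show "modified p \<inter> modified q = {}" using H unfolding disj_list_def
      by (metis Zero_not_Suc length_Cons not_less_eq nth_Cons_0 nth_Cons_Suc zero_less_Suc)
  qed
next
  assume H: "disj_list ps \<and> (\<forall>q\<in>set ps. modified p \<inter> modified q = {})"
  show "disj_list (p#ps)" unfolding disj_list_def
  proof (intro allI impI)
    fix j k assume a: "j < length (p#ps)" "k < length (p#ps)" "j \<noteq> k"
    show "modified ((p#ps)!j) \<inter> modified ((p#ps)!k) = {}"
    proof (cases j)
      case 0
      then obtain k' where "k = Suc k'" using a by (cases k) auto
      then show ?thesis using H a 0 by auto
    next
      case (Suc j')
      show ?thesis
      proof (cases k)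
        case 0
        then show ?thesis using H a Suc by auto
      next
        case (Suc k')
        then show ?thesis using H a \<open>j = Suc j'\<close> unfolding disj_list_def by auto
      qed
    qed
  qed
qed

lemma disj_valid:
  "(\<forall>q\<in>set qs. applicable q u) \<Longrightarrow> disj_list qs \<Longrightarrow>
   valid_ops qs u \<and> result qs u = flip (\<Union>(modified ` set qs)) u"
proof (induction qs arbitrary: u)
  case Nil then show ?case by simp
next
  case (Cons p ps)
  have dp: "disj_list ps" and dq: "\<forall>q\<in>set ps. modified p \<inter> modified q = {}"
    using Cons.prems(2) by (auto simp: disj_list_Cons)
  have ap: "applicable p u" using Cons.prems by simp
  have e: "apply_op p u = flip (modified p) u" using apply_flip[OF ap] .
  have "\<forall>q\<in>set ps. applicable q (apply_op p u)"
    using Cons.prems(1) dq e by (auto intro!: applicable_flip simp: Int_commute)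
  from Cons.IH[OF this dp] have v: "valid_ops ps (apply_op p u)"
    and r: "result ps (apply_op p u) = flip (\<Union>(modified ` set ps)) (apply_op p u)" by auto
  have "(\<Union>(modified ` set ps)) \<inter> modified p = {}" using dq by auto
  then have "flip (\<Union>(modified ` set ps)) (flip (modified p) u) = flip (\<Union>(modified ` set ps) \<union> modified p) u"
    by (rule flip_flip)
  then show ?case using ap v r e by (simp add: Un_commute)
qed

lemma valid_disj:
  "valid_ops qs u \<Longrightarrow> disj_list qs \<Longrightarrow> (\<forall>q\<in>set qs. applicable q u)"
proof (induction qs arbitrary: u)
  case Nil then show ?case by simp
next
  case (Cons p ps)
  have dp: "disj_list ps" and dq: "\<forall>q\<in>set ps. modified p \<inter> modified q = {}"
    using Cons.prems(2) by (auto simp: disj_list_Cons)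
  have ap: "applicable p u" using Cons.prems by simp
  have e: "apply_op p u = flip (modified p) u" using apply_flip[OF ap] .
  have IH: "\<forall>q\<in>set ps. applicable q (flip (modified p) u)" using Cons.IH[OF _ dp] Cons.prems(1) e by simp
  have "\<forall>q\<in>set ps. applicable q (flip (modified p) (flip (modified p) u))"
  proof
    fix q assume q: "q \<in> set ps"
    show "applicable q (flip (modified p) (flip (modified p) u))"
      using applicable_flip[of q "flip (modified p) u" "modified p"] IH dq q by (auto simp: Int_commute)
  qed
  then show ?case using ap by (simp add: flip_flip_same)
qed

lemma result_length: "valid_ops ps u \<Longrightarrow> length (result ps u) = length u"
  by (induction ps arbitrary: u) auto

lemma covD:
  assumes "cov Q u M"
  shows "finite Q" "\<And>q. q\<in>Q \<Longrightarrow> applicable q u"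
    "\<And>p q. p\<in>Q \<Longrightarrow> q\<in>Q \<Longrightarrow> p \<noteq> q \<Longrightarrow> modified p \<inter> modified q = {}"
    "\<Union>(modified ` Q) = M"
  using assms unfolding cov_def by auto

lemma cov_list:
  assumes c: "cov Q u (mis u v)" and l: "length v = length u"
  shows "\<exists>qs. set qs = Q \<and> length qs = card Q \<and> transforms qs u v \<and> disj_list qs"
proof -
  obtain qs where qs: "set qs = Q" "distinct qs" using covD(1)[OF c] finite_distinct_list by blast
  have len: "length qs = card Q" using qs distinct_card by metis
  have dl: "disj_list qs" unfolding disj_list_def
  proof (intro allI impI)
    fix j k assume "j < length qs" "k < length qs" "j \<noteq> k"
    then have "qs!j \<noteq> qs!k" "qs!j \<in> Q" "qs!k \<in> Q"
      using qs nth_eq_iff_index_eq[OF qs(2)] nth_mem[of j qs] nth_mem[of k qs] by auto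
    then show "modified (qs!j) \<inter> modified (qs!k) = {}" using covD(3)[OF c] by simp
  qed
  have ap: "\<forall>q\<in>set qs. applicable q u" using covD(2)[OF c] qs by simp
  from disj_valid[OF ap dl] have "valid_ops qs u" "result qs u = flip (mis u v) u"
    using covD(4)[OF c] qs by auto
  then have "transforms qs u v" using flip_mis[OF l] unfolding transforms_def by simp
  then show ?thesis using qs len dl by blast
qed



lemma disj_sym: "B \<inter> A = {} \<Longrightarrow> A \<inter> (B::nat set) = {}" by blast

lemma cov_step:
  assumes ap: "applicable p u" and c: "cov Q' (apply_op p u) (mis (apply_op p u) v)"
    and lv: "length v = length u"
  shows "\<exists>Q. cov Q u (mis u v) \<and> card Q \<le> Suc (card Q')"
proof -
  define T where "T = modified p"
  define w where "w = flip T u"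
  have wa: "apply_op p u = w" using apply_flip[OF ap] by (simp add: T_def w_def)
  have lw: "length w = length u" by (simp add: w_def)
  have uw: "u = flip T w" by (simp add: w_def flip_flip_same)
  have Trange: "T \<subseteq> {..<length u}" using applicable_range[OF ap] by (simp add: T_def)
  define M where "M = mis u v"
  define M' where "M' = mis w v"
  note cd = covD[OF c[unfolded wa]]
  have fin: "finite Q'" using cd(1) .
  have app': "\<And>q. q\<in>Q' \<Longrightarrow> applicable q w" using cd(2) .
  have dis': "\<And>a b. a\<in>Q' \<Longrightarrow> b\<in>Q' \<Longrightarrow> a \<noteq> b \<Longrightarrow> modified a \<inter> modified b = {}" using cd(3) .
  have un': "\<Union>(modified ` Q') = M'" using cd(4) by (simp add: M'_def)
  have MM': "M - T = M' - T"
    by (auto simp: M_def M'_def mis_def w_def)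
  have M'sub: "M' \<subseteq> {..<length u}" by (auto simp: M'_def mis_def lw)
  define Q2 where "Q2 = {q\<in>Q'. modified q \<inter> T = {}}"
  define X where "X = Q' - Q2"
  define L where "L = \<Union>(modified ` X) - T"
  define TB where "TB = (if T \<subseteq> M then {p} else R ` (T \<inter> M))"
  define Q where "Q = Q2 \<union> R ` L \<union> TB"
  have Q2sub: "Q2 \<subseteq> Q'" by (auto simp: Q2_def)
  have finQ2: "finite Q2" using Q2sub fin finite_subset by blast
  have finX: "finite X" using fin by (simp add: X_def)
  have finL: "finite L" using finX by (simp add: L_def)
  have finT: "finite T" by (simp add: T_def)
  have finTB: "finite TB" using finT by (simp add: TB_def)
  have Xp: "\<And>x. x \<in> X \<Longrightarrow> x \<in> Q' \<and> modified x \<inter> T \<noteq> {}" by (auto simp: X_def Q2_def)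
  have c1: "\<And>x. x \<in> X \<Longrightarrow> card (modified x - T) \<le> 1"
  proof -
    fix x assume "x \<in> X"
    then have "modified x - T \<subset> modified x" using Xp by blast
    then have "card (modified x - T) < card (modified x)" by (simp add: psubset_card_mono)
    then show "card (modified x - T) \<le> 1" using card_mod[of x] by linarith
  qed
  have Leq: "L = (\<Union>x\<in>X. modified x - T)" by (auto simp: L_def)
  have "card L \<le> (\<Sum>x\<in>X. card (modified x - T))" unfolding Leq by (rule card_UN_le[OF finX])
  also have "\<dots> \<le> (\<Sum>x\<in>X. 1)" by (rule sum_mono) (rule c1)
  finally have cL: "card L \<le> card X" by simp
  have cTB: "card TB \<le> 1"
  proof (cases "T \<subseteq> M")
    case True then show ?thesis by (simp add: TB_def)
  next
    case False
    then have "T \<inter> M \<subset> T" by blast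
    then have "card (T \<inter> M) < card T" using finT by (simp add: psubset_card_mono)
    then have "card (T \<inter> M) \<le> 1" using card_mod[of p] by (simp add: T_def)
    moreover have "card (R ` (T \<inter> M)) \<le> card (T \<inter> M)" by (rule card_image_le) (simp add: finT)
    ultimately show ?thesis using False by (simp add: TB_def)
  qed
  have cX: "card Q' = card Q2 + card X"
    using card_Diff_subset[OF finQ2 Q2sub] card_mono[OF fin Q2sub] by (simp add: X_def)
  have "card Q \<le> card Q2 + card (R ` L) + card TB"
    unfolding Q_def by (meson card_Un_le add_le_mono1 order_trans)
  moreover have "card (R ` L) \<le> card L" by (rule card_image_le[OF finL])
  ultimately have cardQ: "card Q \<le> Suc (card Q')" using cL cTB cX by linarith
  have A1: "\<And>q x. q \<in> Q2 \<Longrightarrow> x \<in> X \<Longrightarrow> modified q \<inter> modified x = {}"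
    using dis' by (auto simp: X_def Q2_def)
  have A2: "\<And>q. q \<in> Q2 \<Longrightarrow> modified q \<inter> L = {}" using A1 by (auto simp: L_def)
  have A3: "\<And>q. q \<in> Q2 \<Longrightarrow> modified q \<inter> T = {}" by (auto simp: Q2_def)
  have A4: "L \<inter> T = {}" by (auto simp: L_def)
  have A5: "\<And>t. t \<in> TB \<Longrightarrow> modified t \<subseteq> T" by (auto simp: TB_def T_def split: if_splits)
  have A6: "\<And>t1 t2. t1\<in>TB \<Longrightarrow> t2\<in>TB \<Longrightarrow> t1 \<noteq> t2 \<Longrightarrow> modified t1 \<inter> modified t2 = {}"
    by (auto simp: TB_def split: if_splits)
  have D2: "modified a \<inter> modified b = {}" if ha: "a \<in> Q2" and hb: "b \<in> R ` L" for a b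
  proof -
    obtain k where "b = R k" "k \<in> L" using hb by auto
    then show ?thesis using A2[OF ha] by auto
  qed
  have D3: "modified a \<inter> modified b = {}" if "a \<in> Q2" "b \<in> TB" for a b
    using A3[OF that(1)] A5[OF that(2)] by auto
  have D4: "modified a \<inter> modified b = {}" if "a \<in> R ` L" "b \<in> R ` L" "a \<noteq> b" for a b
    using that by auto
  have D5: "modified a \<inter> modified b = {}" if ha: "a \<in> R ` L" and hb: "b \<in> TB" for a b
  proof -
    obtain k where "a = R k" "k \<in> L" using ha by auto
    then show ?thesis using A4 A5[OF hb] by auto
  qed
  have D1: "modified a \<inter> modified b = {}" if "a \<in> Q2" "b \<in> Q2" "a \<noteq> b" for a b
    using dis'[of a b] Q2sub that by auto
  have disQ: "\<And>a b. a\<in>Q \<Longrightarrow> b\<in>Q \<Longrightarrow> a \<noteq> b \<Longrightarrow> modified a \<inter> modified b = {}"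
  proof -
    fix a b assume a: "a \<in> Q" and b: "b \<in> Q" and ab: "a \<noteq> b"
    have a': "a \<in> Q2 \<or> a \<in> R ` L \<or> a \<in> TB" and b': "b \<in> Q2 \<or> b \<in> R ` L \<or> b \<in> TB"
      using a b by (auto simp: Q_def)
    from a' b' show "modified a \<inter> modified b = {}"
      using D1 D2 D3 D4 D5 A6 ab disj_sym by metis
  qed
  have appQ: "\<And>q. q \<in> Q \<Longrightarrow> applicable q u"
  proof -
    fix q assume "q \<in> Q"
    then consider "q \<in> Q2" | "q \<in> R ` L" | "q \<in> TB" by (auto simp: Q_def)
    then show "applicable q u"
    proof cases
      case 1
      then have "applicable q w" "modified q \<inter> T = {}" using app' Q2sub A3 by auto
      then have "applicable q (flip T w)" by (intro applicable_flip) auto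
      then show ?thesis using uw by simp
    next
      case 2
      then obtain k where k: "q = R k" "k \<in> L" by auto
      then have "k \<in> M'" using un' Xp by (auto simp: L_def)
      then show ?thesis using k M'sub by auto
    next
      case 3
      then show ?thesis using ap Trange by (auto simp: TB_def split: if_splits)
    qed
  qed
  have U1: "\<Union>(modified ` Q2) \<union> L = M' - T"
  proof
    show "\<Union>(modified ` Q2) \<union> L \<subseteq> M' - T"
      using un' Q2sub A3 Xp by (auto simp: L_def)
  next
    show "M' - T \<subseteq> \<Union>(modified ` Q2) \<union> L"
    proof
      fix k assume k: "k \<in> M' - T"
      then obtain q where q: "q \<in> Q'" "k \<in> modified q" using un' by auto
      show "k \<in> \<Union>(modified ` Q2) \<union> L"
      proof (cases "q \<in> Q2")
        case True then show ?thesis using q by auto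
      next
        case False then have "q \<in> X" using q by (simp add: X_def)
        then show ?thesis using q k by (auto simp: L_def)
      qed
    qed
  qed
  have U2: "\<Union>(modified ` (R ` L)) = L" by auto
  have U3: "\<Union>(modified ` TB) = T \<inter> M" by (auto simp: TB_def T_def)
  have "\<Union>(modified ` Q) = (\<Union>(modified ` Q2) \<union> L) \<union> (T \<inter> M)"
    unfolding Q_def image_Un Union_Un_distrib U2 U3 by (simp only: Un_assoc)
  also have "\<dots> = (M' - T) \<union> (T \<inter> M)" by (simp only: U1)
  also have "\<dots> = M" using MM' by auto
  finally have unQ: "\<Union>(modified ` Q) = M" .
  have finQ: "finite Q" using finQ2 finL finTB by (simp add: Q_def)
  have "cov Q u M" unfolding cov_def
  proof (intro conjI)
    show "finite Q" by (rule finQ)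
    show "\<forall>q\<in>Q. applicable q u" using appQ by simp
    show "\<forall>a\<in>Q. \<forall>b\<in>Q. a \<noteq> b \<longrightarrow> modified a \<inter> modified b = {}" using disQ by simp
    show "\<Union>(modified ` Q) = M" by (rule unQ)
  qed
  then show ?thesis using cardQ by (auto simp: M_def)
qed

lemma cov_exists: "valid_ops ps u \<Longrightarrow> \<exists>Q. cov Q u (mis u (result ps u)) \<and> card Q \<le> length ps"
proof (induction ps arbitrary: u)
  case Nil
  have "cov {} u (mis u u)" by (simp add: cov_def mis_def)
  then show ?case by auto
next
  case (Cons p ps)
  have ap: "applicable p u" and v: "valid_ops ps (apply_op p u)" using Cons.prems by auto
  obtain Q' where Q': "cov Q' (apply_op p u) (mis (apply_op p u) (result ps (apply_op p u)))" "card Q' \<le> length ps"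
    using Cons.IH[OF v] by blast
  have "length (result ps (apply_op p u)) = length u" using result_length[OF v] by simp
  from cov_step[OF ap Q'(1) this] obtain Q where "cov Q u (mis u (result ps (apply_op p u)))" "card Q \<le> Suc (card Q')" by blast
  then show ?case using Q'(2) by auto
qed

lemma transforms_dist: "transforms ps u v \<Longrightarrow> dist_tilde u v \<le> length ps"
  unfolding dist_tilde_def by (rule Least_le) blast

lemma cov_R: "cov (R ` mis u v) u (mis u v)"
  unfolding cov_def by (auto simp: mis_def)

lemma cov_dist_le: "cov Q u (mis u v) \<Longrightarrow> length v = length u \<Longrightarrow> dist_tilde u v \<le> card Q"
proof -
  assume "cov Q u (mis u v)" "length v = length u"
  from cov_list[OF this] obtain qs where "length qs = card Q" "transforms qs u v" by blast
  then show ?thesis using transforms_dist by metis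
qed

lemma dist_attained: "length v = length u \<Longrightarrow> \<exists>ps. transforms ps u v \<and> length ps = dist_tilde u v"
proof -
  assume l: "length v = length u"
  obtain qs where "transforms qs u v" using cov_list[OF cov_R l] by blast
  then have ex: "\<exists>n ps. transforms ps u v \<and> length ps = n" by blast
  show ?thesis using LeastI_ex[OF ex] unfolding dist_tilde_def by blast
qed

lemma dist_cov: "length v = length u \<Longrightarrow> \<exists>Q. cov Q u (mis u v) \<and> card Q = dist_tilde u v"
proof -
  assume l: "length v = length u"
  obtain ps where ps: "transforms ps u v" "length ps = dist_tilde u v" using dist_attained[OF l] by blast
  then have "valid_ops ps u" "result ps u = v" by (auto simp: transforms_def)
  then obtain Q where Q: "cov Q u (mis u v)" "card Q \<le> length ps" using cov_exists by metis
  have "dist_tilde u v \<le> card Q" using cov_dist_le[OF Q(1) l] .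
  then show ?thesis using Q ps by auto
qed



fun rop :: "nat \<Rightarrow> nat \<Rightarrow> op \<Rightarrow> op set" where
  "rop b L (R i) = (if b \<le> i \<and> i < b + L then {R (i - b)} else {})"
| "rop b L (S i) = (if b \<le> i \<and> Suc i < b + L then {S (i - b)}
     else if b \<le> i \<and> i < b + L then {R (i - b)}
     else if b \<le> Suc i \<and> Suc i < b + L then {R (Suc i - b)} else {})"

lemma rop_mod: "r \<in> rop b L q \<Longrightarrow> modified r = {k. k < L \<and> b + k \<in> modified q}"
  by (cases q) (auto split: if_splits)

lemma rop_finite[simp]: "finite (rop b L q)"
  by (cases q) auto

lemma rop_single: "r1 \<in> rop b L q \<Longrightarrow> r2 \<in> rop b L q \<Longrightarrow> r1 = r2"
  by (cases q) (auto split: if_splits)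

lemma rop_card: "card (rop b L q) \<le> 1"
  by (cases q) auto

lemma rop_cover: "k < L \<Longrightarrow> b + k \<in> modified q \<Longrightarrow> \<exists>r\<in>rop b L q. k \<in> modified r"
  by (cases q) auto

lemma rop_app: "applicable q y \<Longrightarrow> b + L \<le> length y \<Longrightarrow> r \<in> rop b L q \<Longrightarrow>
  applicable r (take L (drop b y))"
  by (cases q) (auto split: if_splits)

lemma cov_restrict:
  assumes c: "cov Q y M" and bl: "b + L \<le> length y"
  shows "cov (\<Union>q\<in>Q. rop b L q) (take L (drop b y)) {k. k < L \<and> b + k \<in> M}
     \<and> card (\<Union>q\<in>Q. rop b L q) \<le> card Q"
proof
  note cd = covD[OF c]
  have "card (\<Union>q\<in>Q. rop b L q) \<le> (\<Sum>q\<in>Q. card (rop b L q))" by (rule card_UN_le[OF cd(1)])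
  also have "\<dots> \<le> (\<Sum>q\<in>Q. 1)" by (rule sum_mono) (rule rop_card)
  finally show "card (\<Union>q\<in>Q. rop b L q) \<le> card Q" by simp
  show "cov (\<Union>q\<in>Q. rop b L q) (take L (drop b y)) {k. k < L \<and> b + k \<in> M}"
    unfolding cov_def
  proof (intro conjI)
    show "finite (\<Union>q\<in>Q. rop b L q)" using cd(1) by simp
    show "\<forall>r\<in>\<Union>q\<in>Q. rop b L q. applicable r (take L (drop b y))"
    proof
      fix r assume "r \<in> (\<Union>q\<in>Q. rop b L q)"
      then obtain q where q: "q \<in> Q" "r \<in> rop b L q" by auto
      show "applicable r (take L (drop b y))" by (rule rop_app[OF cd(2)[OF q(1)] bl q(2)])
    qed
    show "\<forall>r1\<in>\<Union>q\<in>Q. rop b L q. \<forall>r2\<in>\<Union>q\<in>Q. rop b L q. r1 \<noteq> r2 \<longrightarrow> modified r1 \<inter> modified r2 = {}"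
    proof (intro ballI impI)
      fix r1 r2 assume r1: "r1 \<in> (\<Union>q\<in>Q. rop b L q)" and r2: "r2 \<in> (\<Union>q\<in>Q. rop b L q)" and ne: "r1 \<noteq> r2"
      obtain q1 where q1: "q1 \<in> Q" "r1 \<in> rop b L q1" using r1 by blast
      obtain q2 where q2: "q2 \<in> Q" "r2 \<in> rop b L q2" using r2 by blast
      have "q1 \<noteq> q2"
      proof
        assume "q1 = q2"
        then have "r1 = r2" using rop_single q1(2) q2(2) by simp
        then show False using ne by simp
      qed
      then have "modified q1 \<inter> modified q2 = {}" by (rule cd(3)[OF q1(1) q2(1)])
      then show "modified r1 \<inter> modified r2 = {}" unfolding rop_mod[OF q1(2)] rop_mod[OF q2(2)] by auto
    qed
    show "\<Union>(modified ` (\<Union>q\<in>Q. rop b L q)) = {k. k < L \<and> b + k \<in> M}"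
    proof
      show "\<Union>(modified ` (\<Union>q\<in>Q. rop b L q)) \<subseteq> {k. k < L \<and> b + k \<in> M}"
      proof
        fix k assume "k \<in> \<Union>(modified ` (\<Union>q\<in>Q. rop b L q))"
        then obtain q r where q: "q \<in> Q" "r \<in> rop b L q" "k \<in> modified r" by auto
        then have "k < L" "b + k \<in> modified q" using rop_mod[OF q(2)] by auto
        then show "k \<in> {k. k < L \<and> b + k \<in> M}" using q(1) cd(4) by auto
      qed
      show "{k. k < L \<and> b + k \<in> M} \<subseteq> \<Union>(modified ` (\<Union>q\<in>Q. rop b L q))"
      proof
        fix k assume "k \<in> {k. k < L \<and> b + k \<in> M}"
        then have k: "k < L" "b + k \<in> M" by auto
        then obtain q where q: "q \<in> Q" "b + k \<in> modified q" using cd(4) by auto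
        obtain r where "r \<in> rop b L q" "k \<in> modified r" using rop_cover[OF k(1) q(2)] by blast
        then show "k \<in> \<Union>(modified ` (\<Union>q\<in>Q. rop b L q))" using q(1) by auto
      qed
    qed
  qed
qed

lemma cov_pair:
  assumes ap: "applicable p u" and aq: "applicable q u" and d: "modified p \<inter> modified q = {}"
  shows "cov {p,q} (flip (modified q) u) (mis (flip (modified q) u) (flip (modified p) u))"
  unfolding cov_def
proof (intro conjI)
  show "finite {p, q}" by simp
  have "applicable p (flip (modified q) u)" using ap d by (intro applicable_flip) auto
  moreover have "applicable q (flip (modified q) u)" using aq by (intro applicable_flip) auto
  ultimately show "\<forall>r\<in>{p, q}. applicable r (flip (modified q) u)" by simp
  show "\<forall>a\<in>{p, q}. \<forall>b\<in>{p, q}. a \<noteq> b \<longrightarrow> modified a \<inter> modified b = {}"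
    using d by auto
  have rp: "modified p \<subseteq> {..<length u}" "modified q \<subseteq> {..<length u}"
    using applicable_range ap aq by auto
  show "\<Union>(modified ` {p, q}) = mis (flip (modified q) u) (flip (modified p) u)"
  proof (rule set_eqI)
    fix k show "k \<in> \<Union>(modified ` {p, q}) \<longleftrightarrow> k \<in> mis (flip (modified q) u) (flip (modified p) u)"
      using rp d by (cases "k < length u") (auto simp: mis_def)
  qed
qed



lemma overlap_lemma:
  assumes fx: "take n (drop a x) = f" and fy: "take n (drop b y) = f"
    and lx: "a + n \<le> length x" and lxy: "length y = length x"
    and ab: "a < b"
    and hb: "b \<le> h" and hg: "h < g" and ga: "g < a + n" and xh: "x!h \<noteq> y!h" and xg: "x!g \<noteq> y!g"
    and c: "cov Q y (mis y x)" and cq: "card Q \<le> 2"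
  shows "overlap_type_S f (a + n - b) \<or> tilde_error_overlap 2 f (a + n - b)"
proof -
  define l where "l = a + n - b"
  have lf: "length f = n" using fx lx by auto
  have ln: "l \<le> n" using ab by (simp add: l_def)
  have bl: "b + l \<le> length y" using lx lxy ab ga hb hg by (simp add: l_def)
  define P where "P = take l (drop b y)"
  define Sf where "Sf = take l (drop b x)"
  have preP: "pre l f = P"
    unfolding pre_def P_def fy[symmetric] using ln by (simp add: min_def)
  have e1: "length f - l = b - a" using lf ab ga hb hg by (simp add: l_def)
  have e2: "b - a + a = b" using ab by simp
  have "suf l f = drop (b - a) f" unfolding suf_def using e1 by simp
  also have "\<dots> = drop (b - a) (take n (drop a x))" using fx by simp
  also have "\<dots> = take (n - (b - a)) (drop (b - a + a) x)" by (simp only: drop_take drop_drop)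
  also have "\<dots> = Sf" unfolding e2 Sf_def using ab ga hb hg by (simp add: l_def add.commute)
  finally have sufS: "suf l f = Sf" .
  have lP: "length P = l" using bl by (simp add: P_def)
  have lS: "length Sf = l" using bl lxy by (simp add: Sf_def)
  have nP: "\<And>k. k < l \<Longrightarrow> P!k = y!(b+k)" using bl by (simp add: P_def)
  have nS: "\<And>k. k < l \<Longrightarrow> Sf!k = x!(b+k)" using bl lxy by (simp add: Sf_def)
  have misPS: "mis P Sf = {k. k < l \<and> b + k \<in> mis y x}"
    using nP nS bl by (auto simp: mis_def lP)
  obtain Q' where Q': "cov Q' P (mis P Sf)" "card Q' \<le> card Q"
    using cov_restrict[OF c bl] unfolding P_def[symmetric] misPS[symmetric] by blast
  have d2: "dist_tilde P Sf \<le> 2" using cov_dist_le[OF Q'(1)] lP lS Q'(2) cq by simp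
  define h' where "h' = h - b"
  define g' where "g' = g - b"
  have hl: "h' < l" "g' < l" "h' \<noteq> g'" using hb hg ga by (auto simp: h'_def g'_def l_def)
  have dh: "P!h' \<noteq> Sf!h'" using nP nS hl xh hb by (simp add: h'_def)
  have dg: "P!g' \<noteq> Sf!g'" using nP nS hl xg hb hg by (simp add: g'_def)
  obtain ps where ps: "transforms ps P Sf" "length ps = dist_tilde P Sf"
    using dist_attained[of Sf P] lP lS by auto
  have l1: "1 \<le> l" "l \<le> length f - 1" using hl ab lf by (auto simp: l_def)
  have "length ps = 0 \<or> length ps = 1 \<or> length ps = 2" using d2 ps(2) by linarith
  then show ?thesis
  proof (elim disjE)
    assume "length ps = 0"
    then have "P = Sf" using ps(1) by (simp add: transforms_def)
    then show ?thesis using dh by simp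
  next
    assume l1': "length ps = 1"
    then obtain op where op: "ps = [op]" by (cases ps) auto
    have tr: "applicable op P" "apply_op op P = Sf" using ps(1) op by (auto simp: transforms_def)
    show ?thesis
    proof (cases op)
      case (R k)
      then have "Sf = P[k := \<not> P!k]" using tr by (simp add: repl_def)
      then have "\<And>j. j \<noteq> k \<Longrightarrow> Sf!j = P!j" by simp
      then show ?thesis using dh dg hl by metis
    next
      case (S k)
      have "overlap_type_S f l"
        unfolding overlap_type_S_def tilde_error_overlap_def preP sufS
        using l1 ps(2) l1' tr S by auto
      then show ?thesis by (simp add: l_def)
    qed
  next
    assume "length ps = 2"
    then have "tilde_error_overlap 2 f l"
      unfolding tilde_error_overlap_def preP sufS using l1 ps(2) by auto
    then show ?thesis by (simp add: l_def)
  qed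
qed



lemma lo_hi_disj:
  assumes "modified p \<inter> modified r = {}" "lo r < lo p"
  shows "hi r < lo p"
proof (cases r)
  case (R i) then show ?thesis using assms by simp
next
  case (S i)
  show ?thesis
  proof (rule ccontr)
    assume "\<not> hi r < lo p"
    then have "lo p = Suc i" using S assms(2) by simp
    then have "lo p \<in> modified r" using S by simp
    then show False using assms(1) lo_mod[of p] by blast
  qed
qed

lemma select:
  fixes Q :: "op set" and A :: "op \<Rightarrow> nat" and n :: nat
  assumes fin: "finite Q"
    and dis: "\<And>p q. p\<in>Q \<Longrightarrow> q\<in>Q \<Longrightarrow> p \<noteq> q \<Longrightarrow> modified p \<inter> modified q = {}"
    and i: "\<And>p. p\<in>Q \<Longrightarrow> \<exists>k\<in>modified p. A p \<le> k \<and> k < A p + n"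
    and ii: "\<And>p. p\<in>Q \<Longrightarrow> \<exists>r\<in>Q. r \<noteq> p \<and> (\<exists>k\<in>modified r. A p \<le> k \<and> k < A p + n)"
    and ne: "Q \<noteq> {}"
  shows "\<exists>p\<in>Q. \<exists>q\<in>Q. \<exists>h g. p \<noteq> q \<and> h \<in> modified p \<and> g \<in> modified q \<and> h < g \<and>
     A p \<le> h \<and> g < A p + n \<and> A q \<le> h \<and> g < A q + n"
proof -
  have loinj: "lo p \<noteq> lo r" if "p\<in>Q" "r\<in>Q" "p \<noteq> r" for p r
    using dis[OF that] lo_mod[of p] lo_mod[of r] by auto
  define right where "right p \<longleftrightarrow> (\<exists>r\<in>Q. lo p < lo r \<and> (\<exists>k\<in>modified r. A p \<le> k \<and> k < A p + n))" for p
  have "Min (lo ` Q) \<in> lo ` Q" using fin ne by simp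
  then obtain p0 where p0: "p0 \<in> Q" "lo p0 = Min (lo ` Q)" by auto
  have p0min: "\<And>r. r \<in> Q \<Longrightarrow> lo p0 \<le> lo r" using fin p0(2) by simp
  have rp0: "right p0"
  proof -
    obtain r k where r: "r \<in> Q" "r \<noteq> p0" "k \<in> modified r" "A p0 \<le> k" "k < A p0 + n"
      using ii[OF p0(1)] by blast
    have "lo p0 < lo r" using p0min[OF r(1)] loinj[OF r(1) p0(1) r(2)] by simp
    then show ?thesis unfolding right_def using r by blast
  qed
  define Rs where "Rs = {p\<in>Q. right p}"
  have finR: "finite Rs" using fin by (simp add: Rs_def)
  have neR: "Rs \<noteq> {}" using rp0 p0(1) by (auto simp: Rs_def)
  have "Max (lo ` Rs) \<in> lo ` Rs" using finR neR by simp
  then obtain p where p: "p \<in> Rs" "lo p = Max (lo ` Rs)" by auto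
  have pmax: "\<And>r. r \<in> Rs \<Longrightarrow> lo r \<le> lo p" using finR p(2) by simp
  have pQ: "p \<in> Q" and rp: "right p" using p(1) by (auto simp: Rs_def)
  obtain r' k' where r': "r' \<in> Q" "lo p < lo r'" "k' \<in> modified r'" "A p \<le> k'" "k' < A p + n"
    using rp unfolding right_def by blast
  define Ss where "Ss = {r\<in>Q. lo p < lo r}"
  have finS: "finite Ss" using fin by (simp add: Ss_def)
  have neS: "Ss \<noteq> {}" using r' by (auto simp: Ss_def)
  have "Min (lo ` Ss) \<in> lo ` Ss" using finS neS by simp
  then obtain q where q: "q \<in> Ss" "lo q = Min (lo ` Ss)" by auto
  have qmin: "\<And>r. r \<in> Ss \<Longrightarrow> lo q \<le> lo r" using finS q(2) by simp
  have qQ: "q \<in> Q" and pq: "lo p < lo q" using q(1) by (auto simp: Ss_def)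
  have nrq: "\<not> right q"
  proof
    assume "right q"
    then have "q \<in> Rs" using qQ by (simp add: Rs_def)
    then show False using pmax pq by fastforce
  qed
  obtain r t where r: "r \<in> Q" "r \<noteq> q" "t \<in> modified r" "A q \<le> t" "t < A q + n"
    using ii[OF qQ] by blast
  have "\<not> lo q < lo r" using nrq r unfolding right_def by blast
  then have rq: "lo r < lo q" using loinj[OF r(1) qQ r(2)] by simp
  have rp': "lo r \<le> lo p"
  proof (rule ccontr)
    assume "\<not> lo r \<le> lo p"
    then have "r \<in> Ss" using r(1) by (simp add: Ss_def)
    then show False using qmin rq by fastforce
  qed
  obtain k where k: "k \<in> modified p" "A p \<le> k" "k < A p + n" using i[OF pQ] by blast
  obtain z where z: "z \<in> modified q" "A q \<le> z" "z < A q + n" using i[OF qQ] by blast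
  have pneq: "p \<noteq> q" using pq by auto
  have hg: "hi p < lo q" by (rule lo_hi_disj[OF dis[OF qQ pQ pneq[symmetric]] pq])
  have a1: "A p \<le> hi p" using k mod_bounds[of k p] by simp
  have a2: "lo q < A p + n" using qmin[of r'] r' mod_bounds[of k' r'] by (simp add: Ss_def)
  have "t \<le> hi p"
  proof (cases "r = p")
    case True then show ?thesis using r(3) mod_bounds[of t r] by simp
  next
    case False
    then have "lo r < lo p" using rp' loinj[OF r(1) pQ] by fastforce
    moreover have "modified p \<inter> modified r = {}" using dis[OF pQ r(1)] False by auto
    ultimately have "hi r < lo p" using lo_hi_disj by blast
    then show ?thesis using r(3) mod_bounds[of t r] mod_bounds[of "lo p" p] lo_mod[of p] by simp
  qed
  then have a3: "A q \<le> hi p" using r(4) by simp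
  have a4: "lo q < A q + n" using z mod_bounds[of z q] by simp
  have "p \<noteq> q \<and> hi p \<in> modified p \<and> lo q \<in> modified q \<and> hi p < lo q \<and>
     A p \<le> hi p \<and> lo q < A p + n \<and> A q \<le> hi p \<and> lo q < A q + n"
    using pneq hi_mod lo_mod hg a1 a2 a3 a4 by simp
  then show ?thesis using pQ qQ by blast
qed



lemma sublist_window: "a + n \<le> length w \<Longrightarrow> take n (drop a w) = f \<Longrightarrow> sublist f w"
proof -
  assume "take n (drop a w) = f"
  have "w = take a w @ drop a w" by simp
  also have "drop a w = take n (drop a w) @ drop n (drop a w)" by (rule append_take_drop_id[symmetric])
  finally have "w = take a w @ f @ drop n (drop a w)" using \<open>take n (drop a w) = f\<close> by simp
  then show "sublist f w" unfolding sublist_def by blast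
qed

lemma window_occ: "sublist f w \<Longrightarrow> \<exists>a. a + length f \<le> length w \<and> take (length f) (drop a w) = f"
proof -
  assume "sublist f w"
  then obtain ps ss where "w = ps @ f @ ss" unfolding sublist_def by blast
  then show ?thesis by (intro exI[of _ "length ps"]) simp
qed

lemma window_eq:
  assumes "a + n \<le> length x" "length y = length x" "\<And>k. a \<le> k \<Longrightarrow> k < a + n \<Longrightarrow> x!k = y!k"
  shows "take n (drop a x) = take n (drop a y)"
  by (rule nth_equalityI) (use assms in auto)

lemma window_nth:
  assumes "a + n \<le> length x" "take n (drop a x) = f" "a \<le> k" "k < a + n"
  shows "f!(k - a) = x!k"
proof -
  have k1: "k - a < n" and k2: "a + (k - a) = k" using assms by auto
  have "take n (drop a x) ! (k - a) = x!k" using assms(1) k1 k2 by simp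
  then show ?thesis using assms(2) by simp
qed

lemma all_blocked:
  assumes c: "cov Q u (mis u v)" and lv: "length v = length u"
    and fu: "free f u" and fv: "free f v"
    and blk: "\<And>p. p\<in>Q \<Longrightarrow> \<not> free f (apply_op p u)"
    and ne: "Q \<noteq> {}"
  shows "\<exists>l. overlap_type_S f l \<or> tilde_error_overlap 2 f l"
proof -
  define n where "n = length f"
  note cd = covD[OF c]
  have vflip: "v = flip (\<Union>(modified ` Q)) u" using flip_mis[OF lv] cd(4) by simp
  have occ: "\<forall>p\<in>Q. \<exists>a. a + n \<le> length u \<and> take n (drop a (flip (modified p) u)) = f"
  proof
    fix p assume pQ: "p \<in> Q"
    have "sublist f (flip (modified p) u)"
      using blk[OF pQ] apply_flip[OF cd(2)[OF pQ]] by (simp add: free_def)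
    from window_occ[OF this] show "\<exists>a. a + n \<le> length u \<and> take n (drop a (flip (modified p) u)) = f"
      by (simp add: n_def)
  qed
  obtain A where A: "\<And>p. p\<in>Q \<Longrightarrow> A p + n \<le> length u \<and> take n (drop (A p) (flip (modified p) u)) = f"
    using bchoice[OF occ] by blast
  have i: "\<exists>k\<in>modified p. A p \<le> k \<and> k < A p + n" if pQ: "p \<in> Q" for p
  proof (rule ccontr)
    assume H: "\<not> (\<exists>k\<in>modified p. A p \<le> k \<and> k < A p + n)"
    have "take n (drop (A p) (flip (modified p) u)) = take n (drop (A p) u)"
      by (rule window_eq) (use A[OF pQ] H in auto)
    then have "take n (drop (A p) u) = f" using A[OF pQ] by simp
    then have "sublist f u" using sublist_window A[OF pQ] by blast
    then show False using fu by (simp add: free_def)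
  qed
  have ii: "\<exists>r\<in>Q. r \<noteq> p \<and> (\<exists>k\<in>modified r. A p \<le> k \<and> k < A p + n)" if pQ: "p \<in> Q" for p
  proof (rule ccontr)
    assume H: "\<not> (\<exists>r\<in>Q. r \<noteq> p \<and> (\<exists>k\<in>modified r. A p \<le> k \<and> k < A p + n))"
    have "take n (drop (A p) (flip (modified p) u)) = take n (drop (A p) v)"
    proof (rule window_eq)
      show "A p + n \<le> length (flip (modified p) u)" using A[OF pQ] by simp
      show "length v = length (flip (modified p) u)" using lv by simp
      fix k assume k: "A p \<le> k" "k < A p + n"
      have ku: "k < length u" using k A[OF pQ] by simp
      have "k \<in> \<Union>(modified ` Q) \<longleftrightarrow> k \<in> modified p"
      proof
        assume "k \<in> \<Union>(modified ` Q)"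
        then obtain r where r: "r \<in> Q" "k \<in> modified r" by auto
        then show "k \<in> modified p" using H k by (cases "r = p") auto
      next
        assume "k \<in> modified p" then show "k \<in> \<Union>(modified ` Q)" using pQ by auto
      qed
      then show "flip (modified p) u ! k = v ! k" using ku vflip by simp
    qed
    then have "take n (drop (A p) v) = f" using A[OF pQ] by simp
    then have "sublist f v" using sublist_window A[OF pQ] lv by (metis)
    then show False using fv by (simp add: free_def)
  qed
  obtain p q h g where pq: "p \<in> Q" "q \<in> Q" "p \<noteq> q" "h \<in> modified p" "g \<in> modified q" "h < g"
    "A p \<le> h" "g < A p + n" "A q \<le> h" "g < A q + n"
    using select[OF cd(1) cd(3) i ii ne] by blast
  have dpq: "modified p \<inter> modified q = {}" using cd(3)[OF pq(1,2,3)] .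
  have hq: "h \<notin> modified q" and gp: "g \<notin> modified p" using dpq pq(4,5) by auto
  have ap: "applicable p u" and aq: "applicable q u" using cd(2) pq(1,2) by auto
  have lu: "g < length u" using pq(8) A[OF pq(1)] by simp
  have hu: "h < length u" using lu pq(6) by simp
  define x where "x = flip (modified p) u"
  define y where "y = flip (modified q) u"
  have xh: "x!h \<noteq> y!h" and xg: "x!g \<noteq> y!g" using hu lu hq gp pq(4,5) by (auto simp: x_def y_def)
  have Ax: "A p + n \<le> length x" "take n (drop (A p) x) = f" using A[OF pq(1)] by (auto simp: x_def)
  have Ay: "A q + n \<le> length y" "take n (drop (A q) y) = f" using A[OF pq(2)] by (auto simp: y_def)
  have lxy: "length y = length x" by (simp add: x_def y_def)
  have c2: "card {p, q} \<le> 2" by (simp add: card_insert_if)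
  have "A p \<noteq> A q"
  proof
    assume e: "A p = A q"
    have "f!(h - A p) = x!h" using window_nth[OF Ax(1) Ax(2) pq(7)] pq(6,8) by simp
    moreover have "f!(h - A q) = y!h" using window_nth[OF Ay(1) Ay(2) pq(9)] pq(6,10) by simp
    ultimately show False using e xh by simp
  qed
  then consider "A p < A q" | "A q < A p" by linarith
  then show ?thesis
  proof cases
    case 1
    have cv: "cov {p, q} y (mis y x)" unfolding x_def y_def by (rule cov_pair[OF ap aq dpq])
    show ?thesis using overlap_lemma[OF Ax(2) Ay(2) Ax(1) lxy 1 pq(9) pq(6) pq(8) xh xg cv c2] by blast
  next
    case 2
    have cv: "cov {q, p} x (mis x y)" unfolding x_def y_def
      by (rule cov_pair[OF aq ap]) (use dpq in auto)
    have c2': "card {q, p} \<le> 2" by (simp add: card_insert_if)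
    have lyx: "length x = length y" using lxy by simp
    show ?thesis using overlap_lemma[OF Ay(2) Ax(2) Ay(1) lyx 2 pq(7) pq(6) pq(10) _ _ cv c2'] xh xg by metis
  qed
qed



lemma minimal_transf_alt: "minimal_transf ps u v \<longleftrightarrow> transforms ps u v \<and> length ps = dist_tilde u v \<and> disj_list ps"
  unfolding minimal_transf_def disj_list_def by simp

lemma main_ind:
  assumes noov: "\<not> (\<exists>l. overlap_type_S f l \<or> tilde_error_overlap 2 f l)"
  shows "length u = length v \<Longrightarrow> free f u \<Longrightarrow> free f v \<Longrightarrow> dist_tilde u v = d \<Longrightarrow>
     \<exists>ps. minimal_transf ps u v \<and> (\<forall>w\<in>set (trace ps u). free f w)"
proof (induction d arbitrary: u)
  case 0
  have lv: "length v = length u" using 0 by simp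
  obtain Q where Q: "cov Q u (mis u v)" "card Q = dist_tilde u v" using dist_cov[OF lv] by blast
  have "Q = {}" using Q(2) 0 covD(1)[OF Q(1)] by simp
  then have "mis u v = {}" using covD(4)[OF Q(1)] by simp
  then have uv: "u = v" using flip_mis[OF lv] by simp
  have "minimal_transf [] u v" unfolding minimal_transf_def transforms_def using uv 0 by simp
  then show ?case using 0 by auto
next
  case (Suc d)
  have lv: "length v = length u" using Suc.prems(1) by simp
  obtain Q where Q: "cov Q u (mis u v)" "card Q = dist_tilde u v" using dist_cov[OF lv] by blast
  note cd = covD[OF Q(1)]
  have ne: "Q \<noteq> {}" using Q(2) Suc.prems(4) by auto
  show ?case
  proof (cases "\<exists>p\<in>Q. free f (apply_op p u)")
    case False
    then have "\<exists>l. overlap_type_S f l \<or> tilde_error_overlap 2 f l"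
      using all_blocked[OF Q(1) lv Suc.prems(2,3) _ ne] by blast
    then show ?thesis using noov by blast
  next
    case True
    then obtain p where pQ: "p \<in> Q" and fp: "free f (apply_op p u)" by blast
    define u' where "u' = apply_op p u"
    have ap: "applicable p u" using cd(2)[OF pQ] .
    have u'f: "u' = flip (modified p) u" using apply_flip[OF ap] by (simp add: u'_def)
    have pm: "modified p \<subseteq> mis u v" using cd(4) pQ by auto
    have lu': "length u' = length u" by (simp add: u'f)
    have misu': "mis u' v = mis u v - modified p"
    proof (rule set_eqI)
      fix k show "k \<in> mis u' v \<longleftrightarrow> k \<in> mis u v - modified p"
        using pm by (cases "k < length u") (auto simp: mis_def u'f)
    qed
    have cQ': "cov (Q - {p}) u' (mis u' v)" unfolding cov_def
    proof (intro conjI)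
      show "finite (Q - {p})" using cd(1) by simp
      show "\<forall>q\<in>Q - {p}. applicable q u'"
      proof
        fix q assume q: "q \<in> Q - {p}"
        have "modified q \<inter> modified p = {}" using cd(3)[of q p] q pQ by auto
        then show "applicable q u'" unfolding u'f using cd(2) q by (intro applicable_flip) auto
      qed
      show "\<forall>a\<in>Q - {p}. \<forall>b\<in>Q - {p}. a \<noteq> b \<longrightarrow> modified a \<inter> modified b = {}"
        using cd(3) by blast
      show "\<Union>(modified ` (Q - {p})) = mis u' v"
      proof (rule set_eqI)
        fix k show "k \<in> \<Union>(modified ` (Q - {p})) \<longleftrightarrow> k \<in> mis u' v"
        proof
          assume "k \<in> \<Union>(modified ` (Q - {p}))"
          then obtain q where q: "q \<in> Q" "q \<noteq> p" "k \<in> modified q" by auto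
          have "modified q \<inter> modified p = {}" using cd(3)[OF q(1) pQ q(2)] .
          then show "k \<in> mis u' v" using q cd(4) misu' by auto
        next
          assume "k \<in> mis u' v"
          then have "k \<in> mis u v" "k \<notin> modified p" using misu' by auto
          then obtain q where "q \<in> Q" "k \<in> modified q" using cd(4) by auto
          then show "k \<in> \<Union>(modified ` (Q - {p}))" using \<open>k \<notin> modified p\<close> by (cases "q = p") auto
        qed
      qed
    qed
    have lvu': "length v = length u'" using lv lu' by simp
    have "card (Q - {p}) = d" using Q(2) Suc.prems(4) pQ cd(1) by simp
    then have d1: "dist_tilde u' v \<le> d" using cov_dist_le[OF cQ' lvu'] by simp
    obtain ps0 where ps0: "transforms ps0 u' v" "length ps0 = dist_tilde u' v"
      using dist_attained[OF lvu'] by blast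
    have "transforms (p # ps0) u v" using ps0(1) ap by (simp add: transforms_def u'_def)
    then have "dist_tilde u v \<le> Suc (dist_tilde u' v)" using transforms_dist ps0(2) by fastforce
    then have du': "dist_tilde u' v = d" using d1 Suc.prems(4) by simp
    obtain ps' where ps': "minimal_transf ps' u' v" "\<forall>w\<in>set (trace ps' u'). free f w"
      using Suc.IH[OF _ fp[folded u'_def] Suc.prems(3) du'] lvu' by auto
    have tr': "transforms ps' u' v" and lps': "length ps' = d" and dl': "disj_list ps'"
      using ps'(1) du' unfolding minimal_transf_alt by auto
    have vps: "valid_ops ps' u'" and rps: "result ps' u' = v" using tr' by (auto simp: transforms_def)
    have app': "\<forall>q\<in>set ps'. applicable q u'" using valid_disj[OF vps dl'] .
    have "result ps' u' = flip (\<Union>(modified ` set ps')) u'" using disj_valid[OF app' dl'] by simp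
    then have "mis u' v = (\<Union>(modified ` set ps')) \<inter> {..<length u'}" using rps mis_flip by metis
    also have "\<dots> = \<Union>(modified ` set ps')" using app' applicable_range by blast
    finally have U: "\<Union>(modified ` set ps') = mis u v - modified p" using misu' by simp
    have dp: "\<forall>q\<in>set ps'. modified p \<inter> modified q = {}" using U by blast
    have "minimal_transf (p # ps') u v" unfolding minimal_transf_alt
    proof (intro conjI)
      show "transforms (p # ps') u v" using tr' ap by (simp add: transforms_def u'_def)
      show "length (p # ps') = dist_tilde u v" using lps' Suc.prems(4) by simp
      show "disj_list (p # ps')" using dl' dp by (simp add: disj_list_Cons)
    qed
    moreover have "\<forall>w\<in>set (trace (p # ps') u). free f w" using ps'(2) Suc.prems(2) by (simp add: u'_def)
    ultimately show ?thesis by blast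
  qed
qed

theorem proposition3:
  fixes f :: "bool list"
  assumes "\<not> tilde_isometric f"
  shows "(\<exists>l. overlap_type_S f l) \<or> (\<exists>l. tilde_error_overlap 2 f l)"
proof (rule ccontr)
  assume H: "\<not> ((\<exists>l. overlap_type_S f l) \<or> (\<exists>l. tilde_error_overlap 2 f l))"
  then have noov: "\<not> (\<exists>l. overlap_type_S f l \<or> tilde_error_overlap 2 f l)" by blast
  have "tilde_isometric f" unfolding tilde_isometric_def
  proof (intro allI impI)
    fix m u v assume "length f < m" "length u = m" "length v = m" "free f u" "free f v"
    then show "\<exists>ps. minimal_transf ps u v \<and> (\<forall>w\<in>set (trace ps u). free f w)"
      using main_ind[OF noov] by simp
  qed
  then show False using assms by simp
qed

end
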